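(* Let $n\ge1$, $0<\rho<1$, $\varepsilon>0$, and consider $$x_k - C_n^1\rho\, x_{k-1} + C_n^2\rho^2 x_{k-2} - \dots + (-1)^n\rho^n x_{k-n}=v_k,\qquad k=n,n+1,\dots,$$ (characteristic polynomial $(\lambda-\rho)^n$), with initial conditions $x^{(0)}=(x_0,\dots,x_{n-1})$. Fix $t\ge n$. Then the maximum of $x_t$ over all $x^{(0)}$ with $\|x^{(0)}\|_\infty\le1$ and all sequences with $|v_k|\le\varepsilon$ ($k=n,\dots,t$) is attained at $x^{(0)}=((-1)^{n-1},\dots,-1,1)$ (i.e. $x_i=(-1)^{n-1-i}$) and $v_k=\varepsilon$ for $k=n,\dots,t$, and equals $$\alpha_{t,n}+\varepsilon\sum_{k=n}^{t}C_{t-k+n-1}^{n-1}\rho^{t-k},$$ which is strictly less than $\alpha_n+\varepsilon(1-\rho)^{-n}$.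
   Context: $C_p^q=\frac{p!}{q!(p-q)!}$. For $k\ge n$, $\alpha_{k,n}=\sum_{i=0}^{n-1}|P_i(k)|\rho^{k-i}$ where $P_i(k)=\prod_{j\in\{0,\dots,n-1\},j\ne i}\frac{k-j}{i-j}$, and $\alpha_n=\max_{k\ge n}\alpha_{k,n}$. *)

theory Defs
  imports Complex_Main
begin

definition lagrP :: "nat \<Rightarrow> nat \<Rightarrow> nat \<Rightarrow> real" where
  "lagrP n i k = (\<Prod>j\<in>{0..<n} - {i}. (real k - real j) / (real i - real j))"

definition alpha_kn :: "real \<Rightarrow> nat \<Rightarrow> nat \<Rightarrow> real" where
  "alpha_kn \<rho> k n = (\<Sum>i<n. \<bar>lagrP n i k\<bar> * \<rho> ^ (k - i))"

definition alpha_n :: "real \<Rightarrow> nat \<Rightarrow> real" where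
  "alpha_n \<rho> n = (SUP k\<in>{n..}. alpha_kn \<rho> k n)"

definition satisfies_rec :: "nat \<Rightarrow> real \<Rightarrow> nat \<Rightarrow> (nat \<Rightarrow> real) \<Rightarrow> (nat \<Rightarrow> real) \<Rightarrow> bool" where
  "satisfies_rec n \<rho> t x v \<longleftrightarrow>
     (\<forall>k. n \<le> k \<and> k \<le> t \<longrightarrow>
        (\<Sum>j\<le>n. (-1) ^ j * real (n choose j) * \<rho> ^ j * x (k - j)) = v k)"

end

theory Submission
  imports Defs "HOL-Real_Asymp.Real_Asymp"
begin


fun pd :: "nat \<Rightarrow> (real \<Rightarrow> real) \<Rightarrow> bool" where
  "pd 0 f = (\<forall>x. f x = 0)"
| "pd (Suc n) f = pd n (\<lambda>x. f (x + 1) - f x)"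

lemma pd_zero: "pd n (\<lambda>x. 0)"
  by (induction n) auto

lemma pd_add: "pd n f \<Longrightarrow> pd n g \<Longrightarrow> pd n (\<lambda>x. f x + g x)"
proof (induction n arbitrary: f g)
  case 0 then show ?case by simp
next
  case (Suc n)
  have "pd n (\<lambda>x. (f (x+1) - f x) + (g (x+1) - g x))"
    using Suc by simp
  moreover have "(\<lambda>x. (f (x+1) - f x) + (g (x+1) - g x)) = (\<lambda>x. (f (x+1) + g (x+1)) - (f x + g x))"
    by (auto simp: algebra_simps)
  ultimately show ?case by simp
qed

lemma pd_scale: "pd n f \<Longrightarrow> pd n (\<lambda>x. c * f x)"
proof (induction n arbitrary: f)
  case 0 then show ?case by simp
next
  case (Suc n)
  have "pd n (\<lambda>x. c * (f (x+1) - f x))"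
    using Suc by simp
  moreover have "(\<lambda>x. c * (f (x+1) - f x)) = (\<lambda>x. c * f (x+1) - c * f x)"
    by (auto simp: algebra_simps)
  ultimately show ?case by simp
qed

lemma pd_sum: "finite A \<Longrightarrow> (\<And>i. i \<in> A \<Longrightarrow> pd n (f i)) \<Longrightarrow> pd n (\<lambda>x. \<Sum>i\<in>A. f i x)"
  by (induction A rule: finite_induct) (auto intro: pd_add pd_zero)

lemma pd_const: "pd (Suc n) (\<lambda>x. c)"
  using pd_zero[of n] by simp

lemma pd_lin_aux: "\<forall>f a b. pd (Suc m) f \<longrightarrow> pd (Suc (Suc m)) (\<lambda>x. f x * (a * x + b))"
proof (induction m)
  case 0
  show ?case
  proof (intro allI impI)
    fix f a b assume f: "pd (Suc 0) f"
    then have d: "\<And>x. f (x+1) = f x" by simp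
    have "(\<lambda>x. f (x + 1) * (a * (x + 1) + b) - f x * (a * x + b)) = (\<lambda>x. a * f x)"
      by (auto simp: d algebra_simps)
    then show "pd (Suc (Suc 0)) (\<lambda>x. f x * (a * x + b))"
      using pd_scale[OF f, of a] by simp
  qed
next
  case (Suc m)
  show ?case
  proof (intro allI impI)
    fix f a b assume f: "pd (Suc (Suc m)) f"
    then have "pd (Suc m) (\<lambda>x. f (x+1) - f x)" by simp
    with Suc have 1: "pd (Suc (Suc m)) (\<lambda>x. (f (x+1) - f x) * (a * x + (a + b)))" by blast
    have 2: "pd (Suc (Suc m)) (\<lambda>x. a * f x)" using pd_scale[OF f] .
    have "(\<lambda>x. f (x + 1) * (a * (x + 1) + b) - f x * (a * x + b))
        = (\<lambda>x. (f (x+1) - f x) * (a * x + (a + b)) + a * f x)"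
      by (auto simp: algebra_simps)
    then show "pd (Suc (Suc (Suc m))) (\<lambda>x. f x * (a * x + b))"
      using pd_add[OF 1 2] by simp
  qed
qed

lemma pd_lin: "pd (Suc m) f \<Longrightarrow> pd (Suc (Suc m)) (\<lambda>x. f x * (a * x + b))"
  using pd_lin_aux by blast

lemma pd_prod: "finite S \<Longrightarrow> pd (Suc (card S)) (\<lambda>x. \<Prod>j\<in>S. a j * x + b j)"
proof (induction S rule: finite_induct)
  case empty then show ?case using pd_const by simp
next
  case (insert j S)
  have "(\<lambda>x. \<Prod>j\<in>insert j S. a j * x + b j) = (\<lambda>x. (\<Prod>j\<in>S. a j * x + b j) * (a j * x + b j))"
    using insert by (auto simp: mult.commute)
  then show ?case using pd_lin[OF insert.IH] insert by simp
qed

lemma alt_pascal: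
  fixes F :: "nat \<Rightarrow> real"
  shows "(\<Sum>j\<le>Suc n. (-1)^j * real (Suc n choose j) * F j)
       = (\<Sum>j\<le>n. (-1)^j * real (n choose j) * (F j - F (Suc j)))"
proof -
  have e0: "(\<Sum>j\<le>Suc n. (-1)^j * real (Suc n choose j) * F j)
      = F 0 + (\<Sum>j\<le>n. (-1)^(Suc j) * real (Suc n choose Suc j) * F (Suc j))"
    by (subst sum.atMost_Suc_shift) simp
  have e1: "(\<Sum>j\<le>n. (-1)^(Suc j) * real (Suc n choose Suc j) * F (Suc j)) = 
                 (\<Sum>j\<le>n. (-1)^(Suc j) * real (n choose j) * F (Suc j))
                + (\<Sum>j\<le>n. (-1)^(Suc j) * real (n choose Suc j) * F (Suc j))"
    by (simp add: sum.distrib[symmetric] algebra_simps)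
  have e2: "F 0 + (\<Sum>j\<le>n. (-1)^(Suc j) * real (n choose Suc j) * F (Suc j))
      = (\<Sum>j\<le>Suc n. (-1)^j * real (n choose j) * F j)"
    by (subst sum.atMost_Suc_shift) simp
  have e2': "(\<Sum>j\<le>Suc n. (-1)^j * real (n choose j) * F j) = (\<Sum>j\<le>n. (-1)^j * real (n choose j) * F j)"
    by simp
  have e3: "(\<Sum>j\<le>n. (-1)^(Suc j) * real (n choose j) * F (Suc j)) = - (\<Sum>j\<le>n. (-1)^j * real (n choose j) * F (Suc j))"
    by (simp add: sum_negf[symmetric])
  have e4: "(\<Sum>j\<le>n. (-1)^j * real (n choose j) * (F j - F (Suc j))) =
     (\<Sum>j\<le>n. (-1)^j * real (n choose j) * F j) - (\<Sum>j\<le>n. (-1)^j * real (n choose j) * F (Suc j))"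
    by (simp add: sum_subtractf[symmetric] algebra_simps)
  show ?thesis using e0 e1 e2 e2' e3 e4 by linarith
qed

lemma fd_zero: "pd n f \<Longrightarrow> (\<Sum>j\<le>n. (-1)^j * real (n choose j) * f (a - real j)) = 0"
proof (induction n arbitrary: f a)
  case 0 then show ?case by simp
next
  case (Suc n)
  have "(\<Sum>j\<le>Suc n. (-1)^j * real (Suc n choose j) * f (a - real j))
      = (\<Sum>j\<le>n. (-1)^j * real (n choose j) * (f (a - real j) - f (a - real (Suc j))))"
    by (rule alt_pascal)
  also have "\<dots> = (\<Sum>j\<le>n. (-1)^j * real (n choose j) * ((\<lambda>x. f (x+1) - f x) ((a - 1) - real j)))"
    by (rule sum.cong) (auto simp: algebra_simps)
  also have "\<dots> = 0" using Suc.IH[of "\<lambda>x. f (x+1) - f x" "a - 1"] Suc.prems by simp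
  finally show ?case .
qed



definition Lr :: "nat \<Rightarrow> nat \<Rightarrow> real \<Rightarrow> real" where
  "Lr n i z = (\<Prod>j\<in>{0..<n} - {i}. (z - real j) / (real i - real j))"

lemma lagrP_Lr: "lagrP n i k = Lr n i (real k)"
  by (simp add: lagrP_def Lr_def)

lemma pd_Lr: assumes "i < n" shows "pd n (Lr n i)"
proof -
  have eq: "Lr n i = (\<lambda>z. \<Prod>j\<in>{0..<n} - {i}. (1 / (real i - real j)) * z + (- real j / (real i - real j)))"
    unfolding Lr_def by (rule ext, rule prod.cong) (simp_all add: diff_divide_distrib)
  have c: "Suc (card ({0..<n} - {i})) = n" using assms by simp
  have h: "pd (Suc (card ({0..<n} - {i}))) (\<lambda>z. \<Prod>j\<in>{0..<n} - {i}. (1 / (real i - real j)) * z + (- real j / (real i - real j)))"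
    by (rule pd_prod) simp
  from h[unfolded c] show ?thesis unfolding eq .
qed

lemma Lr_node: assumes "k < n" "i < n" shows "Lr n i (real k) = (if i = k then 1 else 0)"
proof (cases "i = k")
  case True then show ?thesis by (simp add: Lr_def)
next
  case False
  then have "k \<in> {0..<n} - {i}" using assms by auto
  have "Lr n i (real k) = 0" unfolding Lr_def
    by (rule prod_zero) (use \<open>k \<in> _\<close> in auto)
  then show ?thesis using False by simp
qed

definition phi :: "nat \<Rightarrow> real \<Rightarrow> real" where
  "phi n z = pochhammer (z + 1) (n - 1) / fact (n - 1)"

lemma pd_poch: "pd (Suc m) (\<lambda>z. pochhammer (z + 1) m)"
proof (induction m)
  case 0 then show ?case by (simp only: pochhammer_0) (rule pd_const)
next
  case (Suc m)
  have "(\<lambda>z. pochhammer (z + 1) (Suc m)) = (\<lambda>z. pochhammer (z + 1) m * (1 * z + (1 + real m)))"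
    by (auto simp: pochhammer_Suc algebra_simps)
  then show ?case using pd_lin[OF Suc, of 1 "1 + real m"] by (simp only:)
qed

lemma pd_phi: "n \<ge> 1 \<Longrightarrow> pd n (phi n)"
proof -
  assume n: "n \<ge> 1"
  have "pd (Suc (n-1)) (\<lambda>z. 1 / fact (n-1) * pochhammer (z + 1) (n - 1))"
    by (rule pd_scale[OF pd_poch])
  moreover have "Suc (n-1) = n" using n by simp
  moreover have "(\<lambda>z. 1 / fact (n-1) * pochhammer (z + 1) (n - 1)) = phi n"
    by (auto simp: phi_def)
  ultimately show ?thesis by (simp only:)
qed

lemma phi_nat: "n \<ge> 1 \<Longrightarrow> real ((a + n - 1) choose (n - 1)) = phi n (real a)"
proof -
  assume n: "n \<ge> 1"
  have "real ((a + n - 1) choose (n - 1)) = (real (a + n - 1) gchoose (n - 1))"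
    by (rule binomial_gbinomial)
  also have "\<dots> = pochhammer (real (a + n - 1) - real (n - 1) + 1) (n - 1) / fact (n - 1)"
    by (rule gbinomial_pochhammer')
  also have "real (a + n - 1) - real (n - 1) = real a" using n by simp
  finally show ?thesis by (simp add: phi_def)
qed

lemma phi_neg: assumes "1 \<le> e" "e \<le> n - 1" shows "phi n (- real e) = 0"
proof -
  have "- real e + 1 = - real (e - 1)" using assms by simp
  moreover have "e - 1 < n - 1" using assms by simp
  then have "pochhammer (- real (e - 1)) (n - 1) = (0::real)"
    unfolding pochhammer_eq_0_iff by blast
  ultimately have "pochhammer (- real e + 1) (n - 1) = 0"
    by (simp only:)
  then show ?thesis by (simp add: phi_def)
qed



definition Qf :: "nat \<Rightarrow> real \<Rightarrow> (nat \<Rightarrow> real) \<Rightarrow> real \<Rightarrow> real" where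
  "Qf n \<rho> x z = (\<Sum>i<n. (x i / \<rho>^i) * Lr n i z)"

definition W :: "nat \<Rightarrow> real \<Rightarrow> nat \<Rightarrow> nat \<Rightarrow> real" where
  "W n \<rho> k m = (if m \<le> k then real ((k - m + n - 1) choose (n - 1)) * \<rho>^(k-m) else 0)"

definition Y :: "nat \<Rightarrow> real \<Rightarrow> nat \<Rightarrow> (nat \<Rightarrow> real) \<Rightarrow> (nat \<Rightarrow> real) \<Rightarrow> nat \<Rightarrow> real" where
  "Y n \<rho> t x v k = \<rho>^k * Qf n \<rho> x (real k) + (\<Sum>m=n..t. W n \<rho> k m * v m)"

lemma pd_Qf: "pd n (Qf n \<rho> x)"
proof -
  have "pd n (\<lambda>z. \<Sum>i<n. (x i / \<rho>^i) * Lr n i z)"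
  proof (rule pd_sum)
    fix i assume "i \<in> {..<n}"
    then show "pd n (\<lambda>z. (x i / \<rho>^i) * Lr n i z)" by (intro pd_scale pd_Lr) simp
  qed simp
  then show ?thesis unfolding Qf_def[abs_def] .
qed

lemma W_term:
  assumes n: "n \<ge> 1" and s: "n \<le> s" and j: "j \<le> n" and ms: "m < s"
  shows "\<rho>^j * W n \<rho> (s - j) m = \<rho>^(s - m) * phi n (real (s - m) - real j)"
proof (cases "j \<le> s - m")
  case True
  have "\<rho>^j * W n \<rho> (s - j) m = \<rho>^j * (real ((s - m - j + n - 1) choose (n - 1)) * \<rho>^(s - m - j))"
  proof -
    have "m \<le> s - j" using True ms by arith
    moreover have "s - j - m = s - m - j" using True ms by arith
    ultimately show ?thesis unfolding W_def by simp
  qed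
  also have "real ((s - m - j + n - 1) choose (n - 1)) = phi n (real (s - m - j))"
    by (rule phi_nat[OF n])
  also have "real (s - m - j) = real (s - m) - real j" using True by simp
  also have "\<rho>^j * (phi n (real (s - m) - real j) * \<rho>^(s - m - j)) = \<rho>^(s-m) * phi n (real (s - m) - real j)"
  proof -
    have "j + (s - m - j) = s - m" using True by arith
    then have "\<rho>^j * \<rho>^(s - m - j) = \<rho>^(s-m)" by (metis power_add)
    then show ?thesis by (simp add: algebra_simps)
  qed
  finally show ?thesis .
next
  case False
  have "\<not> m \<le> s - j" using False s j by arith
  then have "W n \<rho> (s - j) m = 0" unfolding W_def by auto
  moreover have "real (s - m) - real j = - real (j - (s - m))" using False by simp
  moreover have "phi n (- real (j - (s - m))) = 0"
  proof (rule phi_neg)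
    show "1 \<le> j - (s - m)" using False by arith
    show "j - (s - m) \<le> n - 1" using ms j by arith
  qed
  ultimately show ?thesis by (metis mult_zero_right)
qed

lemma W_delta:
  assumes n: "n \<ge> 1" and s: "n \<le> s"
  shows "(\<Sum>j\<le>n. (-1)^j * real (n choose j) * \<rho>^j * W n \<rho> (s - j) m) = (if m = s then 1 else 0)"
proof -
  consider "s < m" | "m = s" | "m < s" by linarith
  then show ?thesis
  proof cases
    case 1
    then have "\<And>j. W n \<rho> (s - j) m = 0" unfolding W_def by auto
    then show ?thesis using 1 by simp
  next
    case 2
    obtain p where p: "n = Suc p" using n by (cases n) auto
    have "(\<Sum>j\<le>n. (-1)^j * real (n choose j) * \<rho>^j * W n \<rho> (s - j) m)
        = W n \<rho> s m + (\<Sum>j\<le>p. (-1)^(Suc j) * real (n choose Suc j) * \<rho>^(Suc j) * W n \<rho> (s - Suc j) m)"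
      unfolding p by (subst sum.atMost_Suc_shift) simp
    also have "(\<Sum>j\<le>p. (-1)^(Suc j) * real (n choose Suc j) * \<rho>^(Suc j) * W n \<rho> (s - Suc j) m) = 0"
      using 2 s p by (intro sum.neutral) (auto simp: W_def)
    also have "W n \<rho> s m = 1" using 2 n by (simp add: W_def)
    finally show ?thesis using 2 by simp
  next
    case 3
    have "(\<Sum>j\<le>n. (-1)^j * real (n choose j) * \<rho>^j * W n \<rho> (s - j) m)
       = (\<Sum>j\<le>n. \<rho>^(s-m) * ((-1)^j * real (n choose j) * phi n (real (s - m) - real j)))"
    proof (rule sum.cong)
      fix j assume "j \<in> {..n}"
      then have "\<rho>^j * W n \<rho> (s - j) m = \<rho>^(s - m) * phi n (real (s - m) - real j)"
        using W_term[OF n s _ 3] by simp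
      then show "(-1)^j * real (n choose j) * \<rho>^j * W n \<rho> (s - j) m
         = \<rho>^(s-m) * ((-1)^j * real (n choose j) * phi n (real (s - m) - real j))"
        by (metis (no_types, lifting) mult.assoc mult.left_commute)
    qed simp
    also have "\<dots> = \<rho>^(s-m) * (\<Sum>j\<le>n. (-1)^j * real (n choose j) * phi n (real (s - m) - real j))"
      by (simp add: sum_distrib_left)
    also have "(\<Sum>j\<le>n. (-1)^j * real (n choose j) * phi n (real (s - m) - real j)) = 0"
      by (rule fd_zero[OF pd_phi[OF n]])
    finally show ?thesis using 3 by simp
  qed
qed



lemma Y_init:
  assumes "k < n" "0 < \<rho>"
  shows "Y n \<rho> t x v k = x k"
proof -
  have "Qf n \<rho> x (real k) = (\<Sum>i<n. (x i / \<rho>^i) * (if i = k then 1 else 0))"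
    unfolding Qf_def by (rule sum.cong) (use assms in \<open>auto simp: Lr_node\<close>)
  also have "\<dots> = x k / \<rho>^k" using assms by (simp add: if_distrib sum.delta cong: if_cong)
  finally have q: "Qf n \<rho> x (real k) = x k / \<rho>^k" .
  have w: "(\<Sum>m=n..t. W n \<rho> k m * v m) = 0"
    using assms by (intro sum.neutral) (auto simp: W_def)
  show ?thesis unfolding Y_def q w using assms by simp
qed

lemma Y_rec:
  assumes n: "n \<ge> 1" and r: "0 < \<rho>"
  shows "satisfies_rec n \<rho> t (Y n \<rho> t x v) v"
  unfolding satisfies_rec_def
proof (intro allI impI)
  fix k assume k: "n \<le> k \<and> k \<le> t"
  have h: "(\<Sum>j\<le>n. (-1)^j * real (n choose j) * \<rho>^j * (\<rho>^(k-j) * Qf n \<rho> x (real (k - j)))) = 0"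
  proof -
    have "(\<Sum>j\<le>n. (-1)^j * real (n choose j) * \<rho>^j * (\<rho>^(k-j) * Qf n \<rho> x (real (k - j))))
        = (\<Sum>j\<le>n. \<rho>^k * ((-1)^j * real (n choose j) * Qf n \<rho> x (real k - real j)))"
    proof (rule sum.cong)
      fix j assume "j \<in> {..n}"
      then have j: "j \<le> k" using k by auto
      then have "\<rho>^j * \<rho>^(k-j) = \<rho>^k" by (metis le_add_diff_inverse power_add)
      moreover have "real (k - j) = real k - real j" using j by simp
      ultimately show "(-1)^j * real (n choose j) * \<rho>^j * (\<rho>^(k-j) * Qf n \<rho> x (real (k - j)))
          = \<rho>^k * ((-1)^j * real (n choose j) * Qf n \<rho> x (real k - real j))"
        by (metis (no_types, lifting) mult.assoc mult.left_commute)
    qed simp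
    also have "\<dots> = \<rho>^k * (\<Sum>j\<le>n. (-1)^j * real (n choose j) * Qf n \<rho> x (real k - real j))"
      by (simp add: sum_distrib_left)
    also have "(\<Sum>j\<le>n. (-1)^j * real (n choose j) * Qf n \<rho> x (real k - real j)) = 0"
      by (rule fd_zero[OF pd_Qf])
    finally show ?thesis by simp
  qed
  have g: "(\<Sum>j\<le>n. (-1)^j * real (n choose j) * \<rho>^j * (\<Sum>m=n..t. W n \<rho> (k - j) m * v m)) = v k"
  proof -
    have "(\<Sum>j\<le>n. (-1)^j * real (n choose j) * \<rho>^j * (\<Sum>m=n..t. W n \<rho> (k - j) m * v m))
       = (\<Sum>j\<le>n. \<Sum>m=n..t. v m * ((-1)^j * real (n choose j) * \<rho>^j * W n \<rho> (k - j) m))"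
      by (simp add: sum_distrib_left algebra_simps)
    also have "\<dots> = (\<Sum>m=n..t. \<Sum>j\<le>n. v m * ((-1)^j * real (n choose j) * \<rho>^j * W n \<rho> (k - j) m))"
      by (rule sum.swap)
    also have "\<dots> = (\<Sum>m=n..t. v m * (if m = k then 1 else 0))"
      by (rule sum.cong) (simp_all add: sum_distrib_left[symmetric] W_delta[OF n] k)
    also have "\<dots> = (\<Sum>m=n..t. if m = k then v m else 0)"
      by (rule sum.cong) auto
    also have "\<dots> = v k" using k by (subst sum.delta) auto
    finally show ?thesis .
  qed
  have "(\<Sum>j\<le>n. (-1)^j * real (n choose j) * \<rho>^j * Y n \<rho> t x v (k - j))
     = (\<Sum>j\<le>n. (-1)^j * real (n choose j) * \<rho>^j * (\<rho>^(k-j) * Qf n \<rho> x (real (k - j))))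
       + (\<Sum>j\<le>n. (-1)^j * real (n choose j) * \<rho>^j * (\<Sum>m=n..t. W n \<rho> (k - j) m * v m))"
    unfolding Y_def by (simp add: sum.distrib[symmetric] algebra_simps)
  then show "(\<Sum>j\<le>n. (-1)^j * real (n choose j) * \<rho>^j * Y n \<rho> t x v (k - j)) = v k"
    using h g by simp
qed

lemma rec_unique:
  assumes n: "n \<ge> 1" and sx: "satisfies_rec n \<rho> t x v" and sy: "satisfies_rec n \<rho> t y v"
    and init: "\<forall>i<n. x i = y i"
  shows "k \<le> t \<Longrightarrow> x k = y k"
proof (induction k rule: less_induct)
  case (less k)
  show ?case
  proof (cases "k < n")
    case True then show ?thesis using init by simp
  next
    case False
    obtain p where p: "n = Suc p" using n by (cases n) auto
    have kk: "n \<le> k \<and> k \<le> t" using False less.prems by simp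
    have ex: "(\<Sum>j\<le>n. (-1)^j * real (n choose j) * \<rho>^j * x (k - j)) = v k"
      using sx kk unfolding satisfies_rec_def by blast
    have ey: "(\<Sum>j\<le>n. (-1)^j * real (n choose j) * \<rho>^j * y (k - j)) = v k"
      using sy kk unfolding satisfies_rec_def by blast
    have sx': "(\<Sum>j\<le>n. (-1)^j * real (n choose j) * \<rho>^j * x (k - j))
       = x k + (\<Sum>j\<le>p. (-1)^Suc j * real (n choose Suc j) * \<rho>^Suc j * x (k - Suc j))"
      unfolding p by (subst sum.atMost_Suc_shift) simp
    have sy': "(\<Sum>j\<le>n. (-1)^j * real (n choose j) * \<rho>^j * y (k - j))
       = y k + (\<Sum>j\<le>p. (-1)^Suc j * real (n choose Suc j) * \<rho>^Suc j * y (k - Suc j))"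
      unfolding p by (subst sum.atMost_Suc_shift) simp
    have "(\<Sum>j\<le>p. (-1)^Suc j * real (n choose Suc j) * \<rho>^Suc j * x (k - Suc j))
        = (\<Sum>j\<le>p. (-1)^Suc j * real (n choose Suc j) * \<rho>^Suc j * y (k - Suc j))"
    proof (rule sum.cong)
      fix j assume "j \<in> {..p}"
      have "k - Suc j < k" using kk n by simp
      moreover have "k - Suc j \<le> t" using kk diff_le_self le_trans by blast
      ultimately have "x (k - Suc j) = y (k - Suc j)" using less.IH by blast
      then show "(-1)^Suc j * real (n choose Suc j) * \<rho>^Suc j * x (k - Suc j)
        = (-1)^Suc j * real (n choose Suc j) * \<rho>^Suc j * y (k - Suc j)" by simp
    qed simp
    then show ?thesis using ex ey sx' sy' by linarith
  qed
qed

lemma xt_formula: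
  assumes n: "n \<ge> 1" and r: "0 < \<rho>" and t: "n \<le> t" and sx: "satisfies_rec n \<rho> t x v"
  shows "x t = (\<Sum>i<n. lagrP n i t * \<rho>^(t-i) * x i)
             + (\<Sum>m=n..t. real ((t - m + n - 1) choose (n - 1)) * \<rho>^(t-m) * v m)"
proof -
  have "x t = Y n \<rho> t x v t"
    by (rule rec_unique[OF n sx Y_rec[OF n r]]) (auto simp: Y_init r)
  also have "\<dots> = (\<Sum>i<n. lagrP n i t * \<rho>^(t-i) * x i)
             + (\<Sum>m=n..t. real ((t - m + n - 1) choose (n - 1)) * \<rho>^(t-m) * v m)"
  proof -
    have a: "\<rho>^t * Qf n \<rho> x (real t) = (\<Sum>i<n. lagrP n i t * \<rho>^(t-i) * x i)"
      unfolding Qf_def sum_distrib_left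
    proof (rule sum.cong)
      fix i assume "i \<in> {..<n}"
      then have "i \<le> t" using t by simp
      then have e: "\<rho>^t = \<rho>^i * \<rho>^(t-i)" by (metis le_add_diff_inverse power_add)
      show "\<rho>^t * (x i / \<rho>^i * Lr n i (real t)) = lagrP n i t * \<rho>^(t-i) * x i"
        unfolding e lagrP_Lr using r by simp
    qed simp
    have b: "(\<Sum>m=n..t. W n \<rho> t m * v m) = (\<Sum>m=n..t. real ((t - m + n - 1) choose (n - 1)) * \<rho>^(t-m) * v m)"
      by (rule sum.cong) (auto simp: W_def)
    show ?thesis unfolding Y_def a b ..
  qed
  finally show ?thesis .
qed



lemma lagr_sign:
  assumes i: "i < n" and t: "n \<le> t"
  shows "lagrP n i t * (-1)^(n-1-i) = \<bar>lagrP n i t\<bar>"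
proof -
  define S where "S = {0..<n} - {i}"
  have fin: "finite S" unfolding S_def by simp
  have f: "(real t - real j) / (real i - real j) = (if j < i then 1 else -1) * \<bar>(real t - real j) / (real i - real j)\<bar>"
    if "j \<in> S" for j
  proof -
    have jt: "real j < real t" using that t unfolding S_def by auto
    show ?thesis
    proof (cases "j < i")
      case True
      then have "real i - real j > 0" by simp
      then show ?thesis using True jt by simp
    next
      case False
      then have "j > i" using that unfolding S_def by auto
      then have "real i - real j < 0" by simp
      then have "(real t - real j) / (real i - real j) < 0" using jt by (simp add: divide_pos_neg)
      then have e: "\<bar>(real t - real j) / (real i - real j)\<bar> = - ((real t - real j) / (real i - real j))"
        by (rule abs_of_neg)
      show ?thesis unfolding e using False by (simp add: minus_divide_left)
    qed
  qed
  have "lagrP n i t = (\<Prod>j\<in>S. (if j < i then 1 else -1) * \<bar>(real t - real j) / (real i - real j)\<bar>)"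
    unfolding lagrP_def S_def[symmetric] by (rule prod.cong) (use f in auto)
  also have "\<dots> = (\<Prod>j\<in>S. (if j < i then 1 else -1::real)) * \<bar>lagrP n i t\<bar>"
    unfolding prod.distrib lagrP_def S_def[symmetric] abs_prod ..
  also have "(\<Prod>j\<in>S. (if j < i then 1 else -1::real)) = (-1)^card (S \<inter> - {j. j < i})"
    by (simp add: prod.If_cases[OF fin])
  also have "S \<inter> - {j. j < i} = {i<..<n}" unfolding S_def by auto
  also have "card {i<..<n} = n - 1 - i" by simp
  finally have e: "lagrP n i t = (-1)^(n-1-i) * \<bar>lagrP n i t\<bar>" .
  have one: "((-1::real)^(n-1-i)) * (-1)^(n-1-i) = 1"
    by (simp add: power_add[symmetric])
  have "lagrP n i t * (-1)^(n-1-i) = ((-1)^(n-1-i) * \<bar>lagrP n i t\<bar>) * (-1)^(n-1-i)"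
    using e by (rule arg_cong[where f="\<lambda>z. z * (-1)^(n-1-i)"])
  also have "\<dots> = \<bar>lagrP n i t\<bar> * (((-1::real)^(n-1-i)) * (-1)^(n-1-i))" by (simp only: ac_simps)
  also have "\<dots> = \<bar>lagrP n i t\<bar>" unfolding one by simp
  finally show ?thesis .
qed

definition T :: "real \<Rightarrow> nat \<Rightarrow> nat \<Rightarrow> real" where
  "T \<rho> p N = (\<Sum>m\<le>N. real ((m + p) choose p) * \<rho>^m)"

lemma T_eq: "(1 - \<rho>) * T \<rho> (Suc p) N + real ((N + p + 1) choose (p + 1)) * \<rho>^(N+1) = T \<rho> p N"
proof (induction N)
  case 0 then show ?case by (simp add: T_def algebra_simps)
next
  case (Suc N)
  have pas: "real ((Suc N + p + 1) choose (p + 1)) = real ((N + p + 1) choose p) + real ((N + p + 1) choose (p + 1))"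
    by (simp add: choose_reduce_nat)
  have "T \<rho> (Suc p) (Suc N) = T \<rho> (Suc p) N + real ((Suc N + p + 1) choose (p + 1)) * \<rho>^(Suc N)"
    by (simp add: T_def)
  moreover have "T \<rho> p (Suc N) = T \<rho> p N + real ((Suc N + p) choose p) * \<rho>^(Suc N)"
    by (simp add: T_def)
  ultimately show ?case using Suc pas by (simp add: algebra_simps)
qed

lemma T_lt: assumes "0 < \<rho>" "\<rho> < 1" shows "T \<rho> p N < 1 / (1 - \<rho>)^(Suc p)"
proof (induction p)
  case 0
  have "T \<rho> 0 N = (\<Sum>m<Suc N. \<rho>^m)" by (simp add: T_def lessThan_Suc_atMost)
  also have "\<dots> = (1 - \<rho>^Suc N) / (1 - \<rho>)" by (rule trans[OF sum_gp_strict]) (use assms in simp)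
  also have "\<dots> < 1 / (1 - \<rho>)" using assms by (simp add: divide_strict_right_mono)
  finally show ?case by simp
next
  case (Suc p)
  have "(1 - \<rho>) * T \<rho> (Suc p) N \<le> T \<rho> p N"
    proof -
    have "0 \<le> real ((N + p + 1) choose (p + 1)) * \<rho>^(N+1)" using assms by simp
    then show ?thesis using T_eq[of \<rho> p N] by linarith
  qed
  then have "T \<rho> (Suc p) N \<le> T \<rho> p N / (1 - \<rho>)" using assms by (simp add: field_simps)
  also have "\<dots> < 1 / (1 - \<rho>)^(Suc p) / (1 - \<rho>)" by (rule divide_strict_right_mono[OF Suc.IH]) (use assms in simp)
  also have "\<dots> = 1 / (1 - \<rho>)^(Suc (Suc p))" by simp
  finally show ?case .
qed

lemma val_sum_T: assumes "n \<ge> 1" "n \<le> t"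
  shows "(\<Sum>k=n..t. real ((t - k + n - 1) choose (n - 1)) * \<rho> ^ (t - k)) = T \<rho> (n-1) (t-n)"
  unfolding T_def
  by (rule sum.reindex_bij_witness[of _ "\<lambda>m. t - m" "\<lambda>k. t - k"]) (use assms in auto)

lemma lagr_bound: assumes "i < n" "n \<le> k" shows "\<bar>lagrP n i k\<bar> \<le> real k ^ (n - 1)"
proof -
  have "\<bar>lagrP n i k\<bar> = (\<Prod>j\<in>{0..<n} - {i}. \<bar>(real k - real j) / (real i - real j)\<bar>)"
    unfolding lagrP_def abs_prod ..
  also have "\<dots> \<le> (\<Prod>j\<in>{0..<n} - {i}. real k)"
  proof (rule prod_mono)
    fix j assume j: "j \<in> {0..<n} - {i}"
    have h1: "\<bar>real i - real j\<bar> \<ge> 1" using j by auto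
    have h2: "\<bar>real k - real j\<bar> \<le> real k" using j assms by auto
    have "\<bar>real k - real j\<bar> / \<bar>real i - real j\<bar> \<le> real k"
    proof -
      have "\<bar>real k - real j\<bar> / \<bar>real i - real j\<bar> \<le> \<bar>real k - real j\<bar> / 1"
        using h1 h2 by (intro divide_left_mono) auto
      also have "\<dots> \<le> real k" using h1 h2 by simp
      finally show ?thesis .
    qed
    then show "0 \<le> \<bar>(real k - real j) / (real i - real j)\<bar> \<and> \<bar>(real k - real j) / (real i - real j)\<bar> \<le> real k"
      by simp
  qed
  also have "\<dots> = real k ^ (n - 1)" using assms by simp
  finally show ?thesis .
qed

lemma poly_exp_lim: "0 < (r::real) \<Longrightarrow> r < 1 \<Longrightarrow> (\<lambda>n. real n ^ q * r ^ n) \<longlonglongrightarrow> 0"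
  by real_asymp

lemma alpha_bdd: assumes r: "0 < \<rho>" "\<rho> < 1"
  shows "bdd_above ((\<lambda>k. alpha_kn \<rho> k n) ` {n..})"
proof -
  have "(\<lambda>k. real k ^ (n-1) * \<rho> ^ k) \<longlonglongrightarrow> 0" using poly_exp_lim r by blast
  then have "Bseq (\<lambda>k. real k ^ (n-1) * \<rho> ^ k)" by (intro convergent_imp_Bseq convergentI)
  then obtain B where B0: "\<forall>k. norm (real k ^ (n-1) * \<rho> ^ k) \<le> B" by (rule BseqE) blast
  then have B: "\<And>k. \<bar>real k ^ (n-1) * \<rho> ^ k\<bar> \<le> B" by simp
  show ?thesis unfolding bdd_above_def
  proof (intro exI ballI)
    fix y assume "y \<in> (\<lambda>k. alpha_kn \<rho> k n) ` {n..}"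
    then obtain k where k: "n \<le> k" and y: "y = alpha_kn \<rho> k n" by auto
    have "alpha_kn \<rho> k n \<le> (\<Sum>i<n. real k ^ (n-1) * (\<rho> ^ k / \<rho>^(n-1)))"
      unfolding alpha_kn_def
    proof (rule sum_mono)
      fix i assume i: "i \<in> {..<n}"
      have "\<rho>^(k-i) = \<rho>^k / \<rho>^i" using i k r by (simp add: power_diff)
      also have "\<dots> \<le> \<rho>^k / \<rho>^(n-1)"
        using i r by (intro divide_left_mono power_decreasing) auto
      finally have a: "\<rho>^(k-i) \<le> \<rho>^k / \<rho>^(n-1)" .
      show "\<bar>lagrP n i k\<bar> * \<rho> ^ (k - i) \<le> real k ^ (n-1) * (\<rho> ^ k / \<rho>^(n-1))"
        using lagr_bound[of i n k] i k a r by (intro mult_mono) auto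
    qed
    also have "\<dots> = real n * ((real k ^ (n-1) * \<rho> ^ k) / \<rho>^(n-1))" by simp
    also have "\<dots> \<le> real n * (B / \<rho>^(n-1))"
      using B[of k] r by (intro mult_left_mono divide_right_mono) auto
    finally show "y \<le> real n * (B / \<rho>^(n-1))" using y by simp
  qed
qed


theorem theorem2p3:
  fixes n t :: nat and \<rho> \<epsilon> :: real
  assumes "n \<ge> 1" and "0 < \<rho>" and "\<rho> < 1" and "\<epsilon> > 0" and "t \<ge> n"
  defines "val \<equiv> alpha_kn \<rho> t n
      + \<epsilon> * (\<Sum>k=n..t. real ((t - k + n - 1) choose (n - 1)) * \<rho> ^ (t - k))"
  shows "(let S = {x t | x v. satisfies_rec n \<rho> t x v
                              \<and> (\<forall>i<n. \<bar>x i\<bar> \<le> 1)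
                              \<and> (\<forall>k. n \<le> k \<and> k \<le> t \<longrightarrow> \<bar>v k\<bar> \<le> \<epsilon>)}
           in val \<in> S \<and> (\<forall>y\<in>S. y \<le> val))
         \<and> (\<forall>x v. satisfies_rec n \<rho> t x v
              \<and> (\<forall>i<n. x i = (-1) ^ (n - 1 - i))
              \<and> (\<forall>k. n \<le> k \<and> k \<le> t \<longrightarrow> v k = \<epsilon>)
              \<longrightarrow> x t = val)
         \<and> val < alpha_n \<rho> n + \<epsilon> / (1 - \<rho>) ^ n"
proof -
  note n = assms(1) and r = assms(2) and r1 = assms(3) and e = assms(4) and t = assms(5)
  define g where "g m = real ((t - m + n - 1) choose (n - 1)) * \<rho>^(t-m)" for m
  have g0: "g m \<ge> 0" for m using r by (simp add: g_def)
  have form: "x t = (\<Sum>i<n. lagrP n i t * \<rho>^(t-i) * x i) + (\<Sum>m=n..t. g m * v m)"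
    if "satisfies_rec n \<rho> t x v" for x v
    using xt_formula[OF n r t that] by (simp add: g_def)
  have val_eq: "val = (\<Sum>i<n. \<bar>lagrP n i t\<bar> * \<rho>^(t-i)) + (\<Sum>m=n..t. g m * \<epsilon>)"
    unfolding val_def alpha_kn_def g_def by (simp add: sum_distrib_left algebra_simps)
  have sign_val: "x t = val"
    if s: "satisfies_rec n \<rho> t x v" and xi: "\<forall>i<n. x i = (-1)^(n-1-i)"
      and vk: "\<forall>k. n \<le> k \<and> k \<le> t \<longrightarrow> v k = \<epsilon>" for x v
  proof -
    have a: "(\<Sum>i<n. lagrP n i t * \<rho>^(t-i) * x i) = (\<Sum>i<n. \<bar>lagrP n i t\<bar> * \<rho>^(t-i))"
    proof (rule sum.cong)
      fix i assume i: "i \<in> {..<n}"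
      then have "lagrP n i t * \<rho>^(t-i) * x i = (lagrP n i t * (-1)^(n-1-i)) * \<rho>^(t-i)"
        using xi by (simp add: algebra_simps)
      also have "lagrP n i t * (-1)^(n-1-i) = \<bar>lagrP n i t\<bar>"
        using i t by (intro lagr_sign) auto
      finally show "lagrP n i t * \<rho>^(t-i) * x i = \<bar>lagrP n i t\<bar> * \<rho>^(t-i)" .
    qed simp
    have b: "(\<Sum>m=n..t. g m * v m) = (\<Sum>m=n..t. g m * \<epsilon>)"
      using vk by (intro sum.cong) auto
    show ?thesis using form[OF s] a b val_eq by simp
  qed
  have upper: "x t \<le> val"
    if s: "satisfies_rec n \<rho> t x v" and xi: "\<forall>i<n. \<bar>x i\<bar> \<le> 1"
      and vk: "\<forall>k. n \<le> k \<and> k \<le> t \<longrightarrow> \<bar>v k\<bar> \<le> \<epsilon>" for x v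
  proof -
    have a: "(\<Sum>i<n. lagrP n i t * \<rho>^(t-i) * x i) \<le> (\<Sum>i<n. \<bar>lagrP n i t\<bar> * \<rho>^(t-i))"
    proof (rule sum_mono)
      fix i assume i: "i \<in> {..<n}"
      have "lagrP n i t * \<rho>^(t-i) * x i \<le> \<bar>lagrP n i t * \<rho>^(t-i) * x i\<bar>" by simp
      also have "\<dots> = \<bar>lagrP n i t\<bar> * \<rho>^(t-i) * \<bar>x i\<bar>" using r by (simp add: abs_mult)
      also have "\<dots> \<le> \<bar>lagrP n i t\<bar> * \<rho>^(t-i) * 1"
        using xi i r by (intro mult_left_mono) auto
      finally show "lagrP n i t * \<rho>^(t-i) * x i \<le> \<bar>lagrP n i t\<bar> * \<rho>^(t-i)" by simp
    qed
    have b: "(\<Sum>m=n..t. g m * v m) \<le> (\<Sum>m=n..t. g m * \<epsilon>)"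
    proof (rule sum_mono)
      fix m assume "m \<in> {n..t}"
      then have "v m \<le> \<epsilon>" using vk by force
      then show "g m * v m \<le> g m * \<epsilon>" using g0 by (intro mult_left_mono) auto
    qed
    show ?thesis using form[OF s] a b val_eq by simp
  qed
  define x0 where "x0 = Y n \<rho> t (\<lambda>i. (-1)^(n-1-i)) (\<lambda>_. \<epsilon>)"
  have s0: "satisfies_rec n \<rho> t x0 (\<lambda>_. \<epsilon>)" unfolding x0_def by (rule Y_rec[OF n r])
  have i0: "\<forall>i<n. x0 i = (-1)^(n-1-i)" unfolding x0_def using r by (simp add: Y_init)
  have x0t: "x0 t = val" using sign_val[OF s0 i0] by simp
  have part1: "let S = {x t | x v. satisfies_rec n \<rho> t x v
                              \<and> (\<forall>i<n. \<bar>x i\<bar> \<le> 1)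
                              \<and> (\<forall>k. n \<le> k \<and> k \<le> t \<longrightarrow> \<bar>v k\<bar> \<le> \<epsilon>)}
           in val \<in> S \<and> (\<forall>y\<in>S. y \<le> val)"
    unfolding Let_def
  proof
    have "\<forall>i<n. \<bar>x0 i\<bar> \<le> 1" using i0 by simp
    then show "val \<in> {x t | x v. satisfies_rec n \<rho> t x v
                              \<and> (\<forall>i<n. \<bar>x i\<bar> \<le> 1)
                              \<and> (\<forall>k. n \<le> k \<and> k \<le> t \<longrightarrow> \<bar>v k\<bar> \<le> \<epsilon>)}"
      using s0 x0t e by (intro CollectI exI[of _ x0] exI[of _ "\<lambda>_. \<epsilon>"]) auto
  next
    show "\<forall>y\<in>{x t | x v. satisfies_rec n \<rho> t x v
                              \<and> (\<forall>i<n. \<bar>x i\<bar> \<le> 1)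
                              \<and> (\<forall>k. n \<le> k \<and> k \<le> t \<longrightarrow> \<bar>v k\<bar> \<le> \<epsilon>)}. y \<le> val"
      using upper by blast
  qed
  have part2: "\<forall>x v. satisfies_rec n \<rho> t x v
              \<and> (\<forall>i<n. x i = (-1) ^ (n - 1 - i))
              \<and> (\<forall>k. n \<le> k \<and> k \<le> t \<longrightarrow> v k = \<epsilon>)
              \<longrightarrow> x t = val"
    using sign_val by blast
  have al: "alpha_kn \<rho> t n \<le> alpha_n \<rho> n"
    unfolding alpha_n_def by (rule cSUP_upper) (use t alpha_bdd[OF r r1] in auto)
  have "(\<Sum>k=n..t. real ((t - k + n - 1) choose (n - 1)) * \<rho> ^ (t - k)) = T \<rho> (n-1) (t-n)"
    by (rule val_sum_T[OF n t])
  also have "\<dots> < 1 / (1 - \<rho>)^(Suc (n-1))" by (rule T_lt[OF r r1])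
  also have "Suc (n-1) = n" using n by simp
  finally have "\<epsilon> * (\<Sum>k=n..t. real ((t - k + n - 1) choose (n - 1)) * \<rho> ^ (t - k)) < \<epsilon> * (1 / (1 - \<rho>)^n)"
    using e by (intro mult_strict_left_mono) auto
  then have part3: "val < alpha_n \<rho> n + \<epsilon> / (1 - \<rho>) ^ n"
    using al unfolding val_def by simp
  show ?thesis using part1 part2 part3 by blast
qed

end
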